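(* For every $C>0$ there is a constant $C'>0$ depending only on $C$ such that the following holds. For every positive integer $n$, every $C$-dense $n$-element point set $P$ in the plane, and every stacking order $f$ of $\mathcal{D}(P)$, $$\lim_{\varepsilon\to 0}\mathrm{vis}(\mathcal{D}(\varepsilon P),f)\le C' n^{3/4},$$ where $f$ also denotes the corresponding stacking order of $\mathcal{D}(\varepsilon P)$.
   Context: For a point $p$ in the plane, $D(p)$ denotes the closed disk of radius $1$ centered at $p$, and for a finite point set $P$, $\mathcal{D}(P)=\{D(p): p\in P\}$. A stacking order of a finite collection $\mathcal{D}$ of $n$ distinct unit disks is a bijection $f:\mathcal{D}\to\{1,\dots,n\}$; $f(D)$ is regarded as the height of $D$, and the arrangement is viewed from below. A point $x$ on the boundary circle of $D\in\mathcal{D}$ is visible if $x$ does not lie in any disk $D'\in\mathcal{D}$ with $f(D')<f(D)$. The visible perimeter $\mathrm{vis}(\mathcal{D},f)$ is the total length of all visible boundary points, summed over all disks of $\mathcal{D}$. For $\varepsilon>0$, $\varepsilon P=\{(\varepsilon x,\varepsilon y): (x,y)\in P\}$, and a stacking order $f$ of $\mathcal{D}(P)$ is identified with the stacking order $D(\varepsilon p)\mapsto f(D(p))$ of $\mathcal{D}(\varepsilon P)$. An $n$-element point set $P$ is $C$-dense if $\max\{|pq|: p,q\in P\}\,/\,\min\{|pq|: p,q\in P,\ p\ne q\}\le C n^{1/2}$. *)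

theory Defs
  imports "HOL-Analysis.Analysis"
begin

text \<open>The unit disk D(p) is cball p 1,
its boundary circle is parametrised by t \<mapsto> p + cis t, t \<in> [0, 2 pi), so the
length of a set of boundary points is the Lebesgue measure of its set of angles.\<close>

definition unit_disk :: "complex \<Rightarrow> complex set" where
  "unit_disk p = cball p 1"

text \<open>A stacking order of D(P): a bijection from P (equivalently, from the disks,
since p \<mapsto> D(p) is injective) onto {1..n}.\<close>
definition stacking_order :: "complex set \<Rightarrow> (complex \<Rightarrow> nat) \<Rightarrow> bool" where
  "stacking_order P f \<longleftrightarrow> bij_betw f P {1..card P}"

definition visible_perimeter :: "complex set \<Rightarrow> (complex \<Rightarrow> nat) \<Rightarrow> real" where
  "visible_perimeter P f =
     (\<Sum>p\<in>P. measure lborel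
        {t \<in> {0..<2*pi}. \<forall>q\<in>P. f q < f p \<longrightarrow> p + cis t \<notin> unit_disk q})"

definition scale_set :: "real \<Rightarrow> complex set \<Rightarrow> complex set" where
  "scale_set \<epsilon> P = (\<lambda>p. complex_of_real \<epsilon> * p) ` P"

definition scale_order :: "real \<Rightarrow> (complex \<Rightarrow> nat) \<Rightarrow> (complex \<Rightarrow> nat)" where
  "scale_order \<epsilon> f = (\<lambda>x. f (x / complex_of_real \<epsilon>))"

text \<open>C-dense: max distance / min distance (over distinct pairs) \<le> C n^(1/2),
written out without division (for n = 1 this is vacuous).\<close>
definition C_dense :: "real \<Rightarrow> complex set \<Rightarrow> bool" where
  "C_dense C P \<longleftrightarrow>
     (\<forall>p\<in>P. \<forall>q\<in>P. \<forall>r\<in>P. \<forall>s\<in>P. r \<noteq> s \<longrightarrow>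
        dist p q \<le> C * sqrt (real (card P)) * dist r s)"

end

theory Submission
  imports Defs
begin


definition ip :: "complex \<Rightarrow> real \<Rightarrow> real" where
  "ip v t = Re v * cos t + Im v * sin t"

lemma ip_diff: "ip (a - b) t = ip a t - ip b t"
  by (simp add: ip_def algebra_simps)

lemma ip_le: "\<bar>ip v t\<bar> \<le> cmod v"
proof -
  have e: "(Re v)^2 + (Im v)^2 - (ip v t)^2 = (Re v * sin t - Im v * cos t)^2"
  proof -
    have "(sin t)^2 + (cos t)^2 = 1" by simp
    then show ?thesis unfolding ip_def by algebra
  qed
  have "(ip v t)^2 \<le> (cmod v)^2"
    using e by (simp add: cmod_def) (smt (verit) zero_le_power2)
  then show ?thesis by (metis abs_norm_cancel real_sqrt_abs real_sqrt_le_mono)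
qed

lemma sin_lower: fixes x :: real assumes "0 \<le> x" "x \<le> 1/2" shows "x / 2 \<le> sin x"
proof -
  have "\<bar>sin x - (\<Sum>m<3. sin_coeff m * x ^ m)\<bar> \<le> inverse (fact 3) * \<bar>x\<bar> ^ 3"
    by (rule Maclaurin_sin_bound)
  moreover have "(\<Sum>m<3. sin_coeff m * x ^ m) = x"
    by (simp add: eval_nat_numeral sin_coeff_def)
  ultimately have "\<bar>sin x - x\<bar> \<le> x^3 / 6" using assms by (simp add: eval_nat_numeral divide_simps)
  then have "x - sin x \<le> x^3 / 6" by linarith
  moreover have "x^3 \<le> x"
  proof -
    have "x*x \<le> 1" using assms by (intro mult_le_one) auto
    then have "x * (x*x) \<le> x * 1" using assms by (intro mult_left_mono) auto
    then show ?thesis by (simp add: power3_eq_cube)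
  qed
  ultimately show ?thesis using assms by linarith
qed

lemma ip_convex:
  assumes "0 \<le> ip v a" "0 \<le> ip v (a+s)" "0 \<le> b" "b \<le> s" "s < pi"
  shows "0 \<le> ip v (a+b)"
proof (cases "s = 0")
  case True then show ?thesis using assms by simp
next
  case False
  then have s0: "0 < sin s" using assms by (intro sin_gt_zero) auto
  have id: "sin s * ip v (a+b) = sin (s-b) * ip v a + sin b * ip v (a+s)"
  proof -
    have "sin s = sin ((s - b) + b)" by simp
    also have "\<dots> = sin (s-b) * cos b + cos (s-b) * sin b" by (rule sin_add)
    finally have 1: "sin s = sin (s-b) * cos b + cos (s-b) * sin b" .
    have 2: "cos s = cos (s-b) * cos b - sin (s-b) * sin b"
      by (metis cos_add diff_add_cancel)
    show ?thesis unfolding ip_def cos_add sin_add 1 2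
      using sin_cos_squared_add[of b] by algebra
  qed
  have "0 \<le> sin (s-b)" using assms by (intro sin_ge_zero) auto
  moreover have "0 \<le> sin b" using assms by (intro sin_ge_zero) auto
  ultimately have "0 \<le> sin s * ip v (a+b)" unfolding id using assms by simp
  then show ?thesis using s0 by (simp add: zero_le_mult_iff)
qed



lemma ip_chain:
  assumes "0 \<le> ip v t" "0 \<le> ip v (t+\<beta>)" "0 < \<beta>" "\<beta> < pi"
  shows "cmod v * sin (\<beta>/2) \<le> ip v (t+\<beta>/2)"
proof -
  define x where "x = t + \<beta>/2"
  define h where "h = \<beta>/2"
  define a where "a = ip v x"
  define b where "b = Im v * cos x - Re v * sin x"
  have t: "t = x - h" and tb: "t + \<beta> = x + h" by (auto simp: x_def h_def)
  have 1: "ip v t = cos h * a - sin h * b"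
    unfolding t a_def b_def ip_def cos_diff sin_diff by (simp add: algebra_simps)
  have 2: "ip v (t+\<beta>) = cos h * a + sin h * b"
    unfolding tb a_def b_def ip_def cos_add sin_add by (simp add: algebra_simps)
  have ab: "a^2 + b^2 = (cmod v)^2"
  proof -
    have "(sin x)^2 + (cos x)^2 = 1" by simp
    then have "a^2 + b^2 = (Re v)^2 + (Im v)^2" unfolding a_def b_def ip_def by algebra
    then show ?thesis by (simp add: cmod_def)
  qed
  have c0: "0 < cos h" using assms by (intro cos_gt_zero_pi) (auto simp: h_def)
  have s0: "0 < sin h" using assms by (intro sin_gt_zero) (auto simp: h_def)
  have "sin h * b \<le> cos h * a" "- (sin h * b) \<le> cos h * a" using assms 1 2 by linarith+
  then have ca: "sin h * \<bar>b\<bar> \<le> cos h * a" using s0 by (cases "b \<ge> 0") auto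
  then have "0 \<le> cos h * a" using s0 by (smt (verit) abs_ge_zero mult_nonneg_nonneg)
  then have a0: "0 \<le> a" using c0 by (simp add: zero_le_mult_iff)
  have "(sin h * \<bar>b\<bar>)^2 \<le> (cos h * a)^2"
    using ca s0 by (intro power_mono) auto
  then have "(sin h)^2 * b^2 \<le> (cos h)^2 * a^2" by (simp add: power_mult_distrib)
  moreover have "(cos h)^2 = 1 - (sin h)^2" by (simp add: cos_squared_eq)
  ultimately have "(sin h)^2 * (a^2 + b^2) \<le> a^2" by (simp add: algebra_simps)
  then have "(sin h * cmod v)^2 \<le> a^2" using ab by (simp add: power_mult_distrib)
  then have "sin h * cmod v \<le> a" by (rule power2_le_imp_le[OF _ a0])
  then show ?thesis unfolding a_def x_def h_def by (simp only: mult.commute)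
qed



lemma sep_card:
  fixes X :: "real set"
  assumes fin: "finite X" and d: "\<delta> > 0" and D: "D \<ge> 0"
    and sep: "\<forall>x\<in>X. \<forall>y\<in>X. x \<noteq> y \<longrightarrow> \<delta> \<le> \<bar>x - y\<bar>"
    and diam: "\<forall>x\<in>X. \<forall>y\<in>X. \<bar>x - y\<bar> \<le> D"
  shows "real (card X) \<le> D / \<delta> + 1"
proof (cases "X = {}")
  case True then show ?thesis using D d by simp
next
  case False
  define a where "a = Min X"
  have aX: "a \<in> X" using fin False by (simp add: a_def)
  have ale: "\<And>x. x \<in> X \<Longrightarrow> a \<le> x" using fin by (simp add: a_def)
  define g where "g x = nat \<lfloor>(x - a) / \<delta>\<rfloor>" for x
  define N where "N = nat \<lfloor>D / \<delta>\<rfloor>"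
  have inj: "inj_on g X"
  proof (rule inj_onI, rule ccontr)
    fix x y assume xy: "x \<in> X" "y \<in> X" "g x = g y" "x \<noteq> y"
    have fx: "0 \<le> (x - a) / \<delta>" "0 \<le> (y - a) / \<delta>" using ale xy d by auto
    then have "\<lfloor>(x - a) / \<delta>\<rfloor> = \<lfloor>(y - a) / \<delta>\<rfloor>" using xy(3) unfolding g_def
      by (metis eq_nat_nat_iff zero_le_floor)
    then have "\<bar>(x - a) / \<delta> - (y - a) / \<delta>\<bar> < 1" by linarith
    then have "\<bar>x - y\<bar> / \<delta> < 1" using d by (simp add: diff_divide_distrib[symmetric])
    then have "\<bar>x - y\<bar> < \<delta>" using d by simp
    with sep xy show False by force
  qed
  have sub: "g ` X \<subseteq> {0..N}"
  proof
    fix z assume "z \<in> g ` X"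
    then obtain x where x: "x \<in> X" "z = g x" by auto
    have "x - a \<le> D" using diam x aX ale by force
    then have "(x - a) / \<delta> \<le> D / \<delta>" using d by (simp add: divide_right_mono)
    then have "\<lfloor>(x - a) / \<delta>\<rfloor> \<le> \<lfloor>D / \<delta>\<rfloor>" by (rule floor_mono)
    then show "z \<in> {0..N}" unfolding x g_def N_def by (simp add: nat_mono)
  qed
  have "card X = card (g ` X)" using inj by (simp add: card_image)
  also have "\<dots> \<le> card {0..N}" using sub by (intro card_mono) auto
  finally have "real (card X) \<le> real N + 1" by simp
  also have "real N \<le> D / \<delta>" unfolding N_def using D d by simp
  finally show ?thesis by simp
qed



lemma Icc_fmeasurable: "{a..b::real} \<in> fmeasurable lborel"
  by (metis cbox_interval fmeasurable_cbox)

lemma shallow_bound: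
  fixes G :: "real set"
  assumes per: "\<And>t. t \<in> G \<longleftrightarrow> t + 2*pi \<in> G"
    and conv: "\<And>a s b. a \<in> G \<Longrightarrow> a + s \<in> G \<Longrightarrow> 0 \<le> b \<Longrightarrow> b \<le> s \<Longrightarrow> s < pi \<Longrightarrow> a + b \<in> G"
    and meas: "{t\<in>{0..<2*pi}. t \<in> G \<and> t + \<beta> \<notin> G} \<in> sets lborel"
    and b0: "0 < \<beta>" and bpi: "\<beta> < pi"
  shows "measure lborel {t\<in>{0..<2*pi}. t \<in> G \<and> t + \<beta> \<notin> G} \<le> 4 * \<beta>"
proof (cases "{t\<in>{0..<2*pi}. t \<in> G \<and> t + \<beta> \<notin> G} = {}")
  case True show ?thesis unfolding True using b0 by simp
next
  case False
  define B where "B = {t\<in>{0..<2*pi}. t \<in> G \<and> t + \<beta> \<notin> G}"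
  obtain u where u: "u \<in> B" using False B_def by blast
  define U where "U = {u-\<beta>..u+\<beta>} \<union> {u+2*pi-\<beta>..u+2*pi} \<union> {u-2*pi..u-2*pi+\<beta>} \<union> {u+pi} \<union> {u-pi}"
  have sub: "B \<subseteq> U"
  proof
    fix t assume t: "t \<in> B"
    have tG: "t \<in> G" "t + \<beta> \<notin> G" "0 \<le> t" "t < 2*pi" using t by (auto simp: B_def)
    have uG: "u \<in> G" "u + \<beta> \<notin> G" "0 \<le> u" "u < 2*pi" using u by (auto simp: B_def)
    define s where "s = t - u"
    have c1: "\<not> (\<beta> \<le> s \<and> s < pi)"
    proof
      assume h: "\<beta> \<le> s \<and> s < pi"
      have "u + s \<in> G" using tG by (simp add: s_def)
      then have "u + \<beta> \<in> G" using conv[OF uG(1) _ _ _] h b0 by auto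
      then show False using uG by simp
    qed
    have c2: "\<not> (-pi < s \<and> s \<le> -\<beta>)"
    proof
      assume h: "-pi < s \<and> s \<le> -\<beta>"
      have "t + (-s) \<in> G" using uG by (simp add: s_def)
      then have "t + \<beta> \<in> G" using conv[OF tG(1), of "-s" \<beta>] h b0 by auto
      then show False using tG by simp
    qed
    have c3: "\<not> (pi < s \<and> s \<le> 2*pi - \<beta>)"
    proof
      assume h: "pi < s \<and> s \<le> 2*pi - \<beta>"
      have "t + (2*pi - s) \<in> G" using uG per[of u] by (simp add: s_def add.commute)
      then have "t + \<beta> \<in> G" using conv[OF tG(1) _ _ _] h b0 by auto
      then show False using tG by simp
    qed
    have c4: "\<not> (-2*pi + \<beta> \<le> s \<and> s < -pi)"
    proof
      assume h: "-2*pi + \<beta> \<le> s \<and> s < -pi"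
      have "u + (s + 2*pi) \<in> G" using tG per[of t] by (simp add: s_def algebra_simps)
      then have "u + \<beta> \<in> G" using conv[OF uG(1) _ _ _] h b0 by auto
      then show False using uG by simp
    qed
    have "-2*pi < s" "s < 2*pi" using tG uG by (auto simp: s_def)
    then show "t \<in> U" using c1 c2 c3 c4 b0 bpi unfolding U_def s_def
      by (cases "t - u = pi"; cases "t - u = -pi") auto
  qed
  have Us: "U \<in> sets lborel" unfolding U_def by auto
  have Uf: "U \<in> fmeasurable lborel"
    by (rule fmeasurableI2[OF Icc_fmeasurable[of "u - 2*pi - 1" "u + 2*pi + 1"]])
       (use b0 bpi Us in \<open>auto simp: U_def\<close>)
  have "measure lborel B \<le> measure lborel U"
    by (rule measure_mono_fmeasurable[OF sub _ Uf]) (use meas B_def in simp)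
  also have "\<dots> \<le> measure lborel {u-\<beta>..u+\<beta>} + measure lborel {u+2*pi-\<beta>..u+2*pi}
      + measure lborel {u-2*pi..u-2*pi+\<beta>} + measure lborel {u+pi} + measure lborel {u-pi}"
    unfolding U_def by (intro measure_Un_le[THEN order_trans] add_right_mono) auto
  also have "\<dots> = 4 * \<beta>" using b0 by (simp add: measure_def)
  finally show ?thesis by (simp add: B_def)
qed



definition GG :: "complex set \<Rightarrow> (complex \<Rightarrow> nat) \<Rightarrow> complex \<Rightarrow> real set" where
  "GG P f p = {t. \<forall>q\<in>P. f q < f p \<longrightarrow> 0 \<le> ip (p - q) t}"

lemma ip_per: "ip v (t + 2*pi) = ip v t"
  by (simp add: ip_def)

lemma GG_per: "t \<in> GG P f p \<longleftrightarrow> t + 2*pi \<in> GG P f p"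
  by (simp add: GG_def ip_per)

lemma GG_conv: "a \<in> GG P f p \<Longrightarrow> a + s \<in> GG P f p \<Longrightarrow> 0 \<le> b \<Longrightarrow> b \<le> s \<Longrightarrow> s < pi \<Longrightarrow> a + b \<in> GG P f p"
  unfolding GG_def using ip_convex by blast

lemma ip_meas[measurable]: "(\<lambda>t. ip v t) \<in> borel_measurable borel"
  unfolding ip_def by measurable

lemma GG_meas: "finite P \<Longrightarrow> GG P f p \<in> sets borel"
proof -
  assume "finite P"
  have "GG P f p = {t\<in>space borel. \<forall>q\<in>P. f q < f p \<longrightarrow> 0 \<le> ip (p - q) t}"
    by (auto simp: GG_def)
  also have "\<dots> \<in> sets borel"
    using \<open>finite P\<close> by (intro sets.sets_Collect_finite_All) auto
  finally show ?thesis .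
qed

lemma chain_card:
  assumes fin: "finite P" and inj: "inj_on f P" and d: "d > 0"
    and sep: "\<forall>r\<in>P. \<forall>s\<in>P. r \<noteq> s \<longrightarrow> d \<le> cmod (r - s)"
    and diam: "\<forall>p\<in>P. \<forall>q\<in>P. cmod (p - q) \<le> Dm" and Dm: "0 \<le> Dm"
    and b: "0 < \<beta>" "\<beta> < pi"
  shows "real (card {p\<in>P. t \<in> GG P f p \<and> t + \<beta> \<in> GG P f p}) \<le> Dm / (d * sin (\<beta>/2)) + 1"
proof -
  define Q where "Q = {p\<in>P. t \<in> GG P f p \<and> t + \<beta> \<in> GG P f p}"
  define h where "h p = ip p (t + \<beta>/2)" for p
  have s0: "0 < sin (\<beta>/2)" using b by (intro sin_gt_zero) auto
  have key: "d * sin (\<beta>/2) \<le> \<bar>h p - h p'\<bar>" if pq: "p \<in> Q" "p' \<in> Q" "p \<noteq> p'" for p p'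
  proof -
    have gen: "d * sin (\<beta>/2) \<le> \<bar>h x - h y\<bar>" if xy: "x \<in> Q" "y \<in> Q" "x \<noteq> y" "f y < f x" for x y
    proof -
      have yP: "y \<in> P" "x \<in> P" using xy by (auto simp: Q_def)
      have "0 \<le> ip (x - y) t" "0 \<le> ip (x - y) (t + \<beta>)"
        using xy yP by (auto simp: Q_def GG_def)
      then have "cmod (x - y) * sin (\<beta>/2) \<le> ip (x - y) (t + \<beta>/2)"
        using b by (intro ip_chain) auto
      moreover have "d \<le> cmod (x - y)" using sep yP xy by auto
      ultimately have "d * sin (\<beta>/2) \<le> ip (x - y) (t + \<beta>/2)"
        using s0 by (smt (verit) mult_right_mono)
      then show ?thesis by (simp add: h_def ip_diff)
    qed
    have "p \<in> P" "p' \<in> P" using pq by (auto simp: Q_def)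
    then have "f p \<noteq> f p'" using inj pq(3) by (meson inj_on_eq_iff)
    then show ?thesis
    proof (cases "f p' < f p")
      case True then show ?thesis using gen pq by auto
    next
      case False
      then have "f p < f p'" using \<open>f p \<noteq> f p'\<close> by simp
      then show ?thesis using gen[of p' p] pq by (simp add: abs_minus_commute)
    qed
  qed
  have injh: "inj_on h Q"
  proof (rule inj_onI, rule ccontr)
    fix x y assume "x \<in> Q" "y \<in> Q" "h x = h y" "x \<noteq> y"
    then show False using key[of x y] mult_pos_pos[OF d s0] by simp
  qed
  have finQ: "finite Q" using fin by (simp add: Q_def)
  have "real (card (h ` Q)) \<le> Dm / (d * sin (\<beta>/2)) + 1"
  proof (rule sep_card)
    show "finite (h ` Q)" using finQ by simp
    show "0 < d * sin (\<beta>/2)" using d s0 by simp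
    show "0 \<le> Dm" by (rule Dm)
    show "\<forall>x\<in>h ` Q. \<forall>y\<in>h ` Q. x \<noteq> y \<longrightarrow> d * sin (\<beta>/2) \<le> \<bar>x - y\<bar>"
      using key by auto
    show "\<forall>x\<in>h ` Q. \<forall>y\<in>h ` Q. \<bar>x - y\<bar> \<le> Dm"
    proof (intro ballI)
      fix x y assume "x \<in> h ` Q" "y \<in> h ` Q"
      then obtain p p' where "p \<in> Q" "p' \<in> Q" "x = h p" "y = h p'" by auto
      moreover have "\<bar>h p - h p'\<bar> \<le> cmod (p - p')"
        using ip_le[of "p - p'"] by (simp add: h_def ip_diff)
      moreover have "cmod (p - p') \<le> Dm" using diam \<open>p \<in> Q\<close> \<open>p' \<in> Q\<close> by (auto simp: Q_def)
      ultimately show "\<bar>x - y\<bar> \<le> Dm" by simp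
    qed
  qed
  then show ?thesis using injh by (simp add: card_image Q_def)
qed



lemma sum_measure_bound:
  fixes A :: "complex \<Rightarrow> real set"
  assumes fin: "finite P" and K: "\<And>t. real (card {p\<in>P. t \<in> A p}) \<le> K"
    and meas: "\<And>p. p \<in> P \<Longrightarrow> A p \<in> sets borel"
  shows "(\<Sum>p\<in>P. measure lborel ({0..<2*pi} \<inter> A p)) \<le> 2 * pi * K"
proof -
  have ms: "{0..<2*pi} \<inter> A p \<in> sets lborel" if "p \<in> P" for p
    using meas[OF that] by auto
  have fm: "emeasure lborel ({0..<2*pi} \<inter> A p) < \<infinity>" if "p \<in> P" for p
  proof -
    have "emeasure lborel ({0..<2*pi} \<inter> A p) \<le> emeasure lborel {0..<2*pi}"
      by (rule emeasure_mono) auto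
    also have "\<dots> < \<infinity>" by simp
    finally show ?thesis .
  qed
  have int: "integrable lborel (indicator ({0..<2*pi} \<inter> A p) :: real \<Rightarrow> real)" if "p \<in> P" for p
    using ms[OF that] fm[OF that] by simp
  have "(\<Sum>p\<in>P. measure lborel ({0..<2*pi} \<inter> A p))
      = (\<Sum>p\<in>P. integral\<^sup>L lborel (indicator ({0..<2*pi} \<inter> A p) :: real \<Rightarrow> real))"
    by simp
  also have "\<dots> = integral\<^sup>L lborel (\<lambda>t. \<Sum>p\<in>P. indicator ({0..<2*pi} \<inter> A p) t :: real)"
    by (rule Bochner_Integration.integral_sum[symmetric]) (rule int)
  also have "\<dots> \<le> integral\<^sup>L lborel (\<lambda>t. K * indicator {0..<2*pi} t)"
  proof (rule integral_mono)
    show "integrable lborel (\<lambda>t. \<Sum>p\<in>P. indicator ({0..<2*pi} \<inter> A p) t :: real)"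
      using int by auto
    show "integrable lborel (\<lambda>t. K * indicator {0..<2*pi} t :: real)" by simp
    fix t :: real
    show "(\<Sum>p\<in>P. indicator ({0..<2*pi} \<inter> A p) t) \<le> K * indicator {0..<2*pi} t"
    proof (cases "t \<in> {0..<2*pi}")
      case True
      have "(\<Sum>p\<in>P. indicator ({0..<2*pi} \<inter> A p) t :: real) = (\<Sum>p\<in>P. of_bool (t \<in> A p))"
        using True by (intro sum.cong) (auto simp: indicator_def)
      also have "\<dots> = real (card (P \<inter> {p. t \<in> A p}))" using fin by simp
      also have "P \<inter> {p. t \<in> A p} = {p\<in>P. t \<in> A p}" by auto
      finally show ?thesis using True K[of t] by simp
    next
      case False
      then have "(\<Sum>p\<in>P. indicator ({0..<2*pi} \<inter> A p) t :: real) = 0"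
        by (intro sum.neutral) (auto simp: indicator_def)
      then show ?thesis using False by simp
    qed
  qed
  also have "\<dots> = 2 * pi * K" by simp
  finally show ?thesis .
qed



lemma powr_facts:
  assumes "n \<ge> (1::real)"
  shows "sqrt n / n powr (-1/4) = n powr (3/4)" "n powr (-1/4) * n = n powr (3/4)"
    "0 < n powr (-1/4)" "n powr (-1/4) \<le> 1" "1 \<le> n powr (3/4)"
proof -
  have n0: "0 < n" using assms by simp
  show "sqrt n / n powr (-1/4) = n powr (3/4)"
    using n0 powr_half_sqrt[of n] powr_diff[of n "1/2" "-1/4"] by simp
  show "n powr (-1/4) * n = n powr (3/4)"
    using n0 powr_add[of n "-1/4" 1] by simp
  show "0 < n powr (-1/4)" using n0 by simp
  show "n powr (-1/4) \<le> 1" using powr_mono[of "-1/4" 0 n] assms by simp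
  show "1 \<le> n powr (3/4)" using assms by (intro ge_one_powr_ge_zero) auto
qed



lemma shift_meas:
  assumes "A \<in> sets borel" shows "(\<lambda>t::real. t + b) -` A \<in> sets borel"
proof -
  have "(\<lambda>t::real. t + b) \<in> measurable borel borel" by measurable
  then show ?thesis using measurable_sets_borel assms by blast
qed

lemma Ico_fmeasurable: "{a..<b::real} \<in> fmeasurable lborel"
  by (rule fmeasurableI2[OF Icc_fmeasurable[of a b]]) auto

lemma comb_bound:
  assumes C: "C > 0" and fin: "finite P" and cardP: "card P = n" and n0: "n > 0"
    and dense: "C_dense C P" and so: "stacking_order P f"
  shows "(\<Sum>p\<in>P. measure lborel ({0..<2*pi} \<inter> GG P f p)) \<le> (8*pi*C + 2*pi + 4) * real n powr (3/4)"
proof -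
  have inj: "inj_on f P" using so by (simp add: stacking_order_def bij_betw_def)
  have each: "measure lborel ({0..<2*pi} \<inter> GG P f p) \<le> 2*pi" for p
  proof -
    have "measure lborel ({0..<2*pi} \<inter> GG P f p) \<le> measure lborel {0..<2*pi}"
      by (rule measure_mono_fmeasurable) (use GG_meas[OF fin] Ico_fmeasurable in auto)
    then show ?thesis by simp
  qed
  have n1: "real n \<ge> 1" using n0 by simp
  note pf = powr_facts[OF n1]
  show ?thesis
  proof (cases "n = 1")
    case True
    then obtain p where P: "P = {p}" using cardP by (auto simp: card_Suc_eq)
    have "(\<Sum>p\<in>P. measure lborel ({0..<2*pi} \<inter> GG P f p)) \<le> 2*pi" using each P by simp
    also have "\<dots> \<le> (8*pi*C + 2*pi + 4) * real n powr (3/4)" using True C by simp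
    finally show ?thesis .
  next
    case False
    then have n2: "n \<ge> 2" using n0 by simp
    then have "\<not> card P \<le> Suc 0" using cardP by simp
    then obtain r0 s0 where rs: "r0 \<in> P" "s0 \<in> P" "r0 \<noteq> s0"
      using card_le_Suc0_iff_eq[OF fin] by blast
    define DS where "DS = (\<lambda>(r,s). cmod (r - s)) ` {(r,s). r \<in> P \<and> s \<in> P \<and> r \<noteq> s}"
    have DSfin: "finite DS" unfolding DS_def
      by (rule finite_imageI, rule finite_subset[of _ "P \<times> P"]) (use fin in auto)
    have DSne: "DS \<noteq> {}" using rs unfolding DS_def by auto
    define d where "d = Min DS"
    have "d \<in> DS" using DSfin DSne by (simp add: d_def)
    then obtain r1 s1 where r1: "r1 \<in> P" "s1 \<in> P" "r1 \<noteq> s1" "d = cmod (r1 - s1)"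
      unfolding DS_def by auto
    have d0: "d > 0" using r1 by simp
    have sep: "\<forall>r\<in>P. \<forall>s\<in>P. r \<noteq> s \<longrightarrow> d \<le> cmod (r - s)"
    proof (intro ballI impI)
      fix r s assume "r \<in> P" "s \<in> P" "r \<noteq> s"
      then have "cmod (r - s) \<in> DS" unfolding DS_def by force
      then show "d \<le> cmod (r - s)" using DSfin by (simp add: d_def)
    qed
    define Dm where "Dm = C * sqrt (real n) * d"
    have diam: "\<forall>p\<in>P. \<forall>q\<in>P. cmod (p - q) \<le> Dm"
      using dense r1 cardP unfolding C_dense_def Dm_def by (auto simp: dist_norm)
    have Dm0: "0 \<le> Dm" using C d0 by (simp add: Dm_def)
    define \<beta> where "\<beta> = real n powr (-1/4)"
    have b0: "0 < \<beta>" and b1: "\<beta> \<le> 1" using pf by (auto simp: \<beta>_def)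
    have bpi: "\<beta> < pi" using b1 pi_gt3 by linarith
    define A where "A p = {t. t \<in> GG P f p \<and> t + \<beta> \<in> GG P f p}" for p
    define B where "B p = {t\<in>{0..<2*pi}. t \<in> GG P f p \<and> t + \<beta> \<notin> GG P f p}" for p
    have Ameas: "A p \<in> sets borel" for p
    proof -
      have "A p = GG P f p \<inter> (\<lambda>t. t + \<beta>) -` GG P f p" by (auto simp: A_def)
      also have "\<dots> \<in> sets borel"
        using GG_meas[OF fin, of f p] by (intro sets.Int) (auto intro: shift_meas)
      finally show ?thesis .
    qed
    have Bmeas: "B p \<in> sets lborel" for p
    proof -
      have "B p = {0..<2*pi} \<inter> (GG P f p - (\<lambda>t. t + \<beta>) -` GG P f p)" by (auto simp: B_def)
      also have "\<dots> \<in> sets borel"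
        using GG_meas[OF fin, of f p] by (intro sets.Int sets.Diff) (auto intro: shift_meas)
      finally show ?thesis by simp
    qed
    have split: "measure lborel ({0..<2*pi} \<inter> GG P f p) \<le> measure lborel ({0..<2*pi} \<inter> A p) + 4 * \<beta>" for p
    proof -
      have sub: "{0..<2*pi} \<inter> GG P f p \<subseteq> ({0..<2*pi} \<inter> A p) \<union> B p"
        by (auto simp: A_def B_def)
      have fm: "({0..<2*pi} \<inter> A p) \<union> B p \<in> fmeasurable lborel"
        by (rule fmeasurableI2[OF Icc_fmeasurable[of 0 "2*pi"]]) (use Ameas Bmeas in \<open>auto simp: B_def\<close>)
      have "measure lborel ({0..<2*pi} \<inter> GG P f p) \<le> measure lborel (({0..<2*pi} \<inter> A p) \<union> B p)"
        by (rule measure_mono_fmeasurable[OF sub _ fm]) (use GG_meas[OF fin] in auto)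
      also have "\<dots> \<le> measure lborel ({0..<2*pi} \<inter> A p) + measure lborel (B p)"
        by (rule measure_Un_le) (use Ameas Bmeas in auto)
      also have "measure lborel (B p) \<le> 4 * \<beta>"
        unfolding B_def
        by (rule shallow_bound[OF GG_per GG_conv _ b0 bpi]) (use Bmeas B_def in auto)
      finally show ?thesis by simp
    qed
    define K where "K = Dm / (d * sin (\<beta>/2)) + 1"
    have Kb: "real (card {p\<in>P. t \<in> A p}) \<le> K" for t
      unfolding A_def K_def mem_Collect_eq
      by (rule chain_card[OF fin inj d0 sep diam Dm0 b0 bpi])
    have sumA: "(\<Sum>p\<in>P. measure lborel ({0..<2*pi} \<inter> A p)) \<le> 2 * pi * K"
      by (rule sum_measure_bound[OF fin Kb]) (use Ameas in auto)
    have sinb: "\<beta>/4 \<le> sin (\<beta>/2)" using sin_lower[of "\<beta>/2"] b0 b1 by simp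
    have "K \<le> C * sqrt (real n) * 4 / \<beta> + 1"
    proof -
      have "Dm / (d * sin (\<beta>/2)) = C * sqrt (real n) / sin (\<beta>/2)"
        using d0 by (simp add: Dm_def)
      also have "\<dots> \<le> C * sqrt (real n) / (\<beta>/4)"
        using sinb b0 C by (intro divide_left_mono) auto
      finally show ?thesis by (simp add: K_def)
    qed
    also have "C * sqrt (real n) * 4 / \<beta> = 4 * C * real n powr (3/4)"
    proof -
      have e: "sqrt (real n) / \<beta> = real n powr (3/4)" using pf(1) by (simp only: \<beta>_def)
      have "C * sqrt (real n) * 4 / \<beta> = 4 * C * (sqrt (real n) / \<beta>)" by simp
      also have "\<dots> = 4 * C * real n powr (3/4)" by (simp only: e)
      finally show ?thesis .
    qed
    finally have Kle: "K \<le> 4 * C * real n powr (3/4) + 1" .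
    have "(\<Sum>p\<in>P. measure lborel ({0..<2*pi} \<inter> GG P f p))
        \<le> (\<Sum>p\<in>P. measure lborel ({0..<2*pi} \<inter> A p) + 4 * \<beta>)"
      by (intro sum_mono split)
    also have "\<dots> = (\<Sum>p\<in>P. measure lborel ({0..<2*pi} \<inter> A p)) + 4 * \<beta> * real n"
      using cardP by (simp add: sum.distrib)
    also have "\<dots> \<le> 2 * pi * K + 4 * real n powr (3/4)"
      using sumA pf(2) by (simp add: \<beta>_def)
    also have "\<dots> \<le> 2 * pi * (4 * C * real n powr (3/4) + 1) + 4 * real n powr (3/4)"
      using Kle by simp
    also have "\<dots> \<le> (8*pi*C + 2*pi + 4) * real n powr (3/4)"
      using pf(5) by (simp add: algebra_simps)
    finally show ?thesis .
  qed
qed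



definition VV :: "complex set \<Rightarrow> (complex \<Rightarrow> nat) \<Rightarrow> real \<Rightarrow> complex \<Rightarrow> real set" where
  "VV P f \<epsilon> p = {t\<in>{0..<2*pi}. \<forall>q\<in>P. f q < f p \<longrightarrow> 0 < \<epsilon> * (cmod (p - q))^2 + 2 * ip (p - q) t}"

lemma cmod_shift_sq:
  "(cmod (complex_of_real \<epsilon> * v + cis t))^2 = \<epsilon>^2 * (cmod v)^2 + 2 * \<epsilon> * ip v t + 1"
proof -
  have "(sin t)^2 + (cos t)^2 = 1" by simp
  then have "(\<epsilon> * Re v + cos t)\<^sup>2 + (\<epsilon> * Im v + sin t)\<^sup>2 =
     \<epsilon>\<^sup>2 * ((Re v)\<^sup>2 + (Im v)\<^sup>2) + 2 * \<epsilon> * (Re v * cos t + Im v * sin t) + 1" by algebra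
  then show ?thesis unfolding cmod_power2 ip_def by (simp add: cmod_power2)
qed

lemma VV_meas: "finite P \<Longrightarrow> VV P f \<epsilon> p \<in> sets borel"
proof -
  assume fin: "finite P"
  have "VV P f \<epsilon> p = {0..<2*pi} \<inter> {t\<in>space borel. \<forall>q\<in>P. f q < f p \<longrightarrow> 0 < \<epsilon> * (cmod (p - q))^2 + 2 * ip (p - q) t}"
    by (auto simp: VV_def)
  also have "\<dots> \<in> sets borel"
    using fin by (intro sets.Int sets.sets_Collect_finite_All) auto
  finally show ?thesis .
qed

lemma vis_eq:
  assumes "\<epsilon> > 0"
  shows "visible_perimeter (scale_set \<epsilon> P) (scale_order \<epsilon> f) = (\<Sum>p\<in>P. measure lborel (VV P f \<epsilon> p))"
proof -
  define g where "g p = complex_of_real \<epsilon> * p" for p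
  have inj: "inj_on g P" using assms by (auto simp: g_def inj_on_def)
  have so: "scale_order \<epsilon> f (g p) = f p" for p using assms by (simp add: scale_order_def g_def)
  have mem: "(\<epsilon> * p + cis t \<notin> unit_disk (\<epsilon> * q)) \<longleftrightarrow> 0 < \<epsilon> * (cmod (p - q))^2 + 2 * ip (p - q) t"
    for p q :: complex and t
  proof -
    have "(\<epsilon> * p + cis t \<notin> unit_disk (\<epsilon> * q)) \<longleftrightarrow> 1 < cmod (complex_of_real \<epsilon> * (p - q) + cis t)"
      unfolding unit_disk_def mem_cball dist_norm not_le
      by (simp add: algebra_simps norm_minus_commute)
    also have "\<dots> \<longleftrightarrow> 1 < (cmod (complex_of_real \<epsilon> * (p - q) + cis t))^2"
      by (smt (verit) norm_ge_zero one_less_power power2_le_imp_le zero_less_numeral one_power2)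
    also have "\<dots> \<longleftrightarrow> 0 < \<epsilon> * (\<epsilon> * (cmod (p - q))^2 + 2 * ip (p - q) t)"
      unfolding cmod_shift_sq by (simp add: algebra_simps power2_eq_square)
    also have "\<dots> \<longleftrightarrow> 0 < \<epsilon> * (cmod (p - q))^2 + 2 * ip (p - q) t"
      using assms by (simp add: zero_less_mult_iff)
    finally show ?thesis .
  qed
  have "visible_perimeter (scale_set \<epsilon> P) (scale_order \<epsilon> f)
      = (\<Sum>x\<in>g ` P. measure lborel {t \<in> {0..<2*pi}. \<forall>q\<in>g ` P. scale_order \<epsilon> f q < scale_order \<epsilon> f x \<longrightarrow> x + cis t \<notin> unit_disk q})"
    by (simp add: visible_perimeter_def scale_set_def g_def)
  also have "\<dots> = (\<Sum>p\<in>P. measure lborel {t \<in> {0..<2*pi}. \<forall>q\<in>g ` P. scale_order \<epsilon> f q < scale_order \<epsilon> f (g p) \<longrightarrow> g p + cis t \<notin> unit_disk q})"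
    by (rule sum.reindex[OF inj, unfolded comp_def])
  also have "\<dots> = (\<Sum>p\<in>P. measure lborel (VV P f \<epsilon> p))"
    by (intro sum.cong refl arg_cong[where f="measure lborel"]) (auto simp: VV_def so[unfolded g_def] mem g_def)
  finally show ?thesis .
qed



lemma VV_lim:
  assumes fin: "finite P"
  shows "((\<lambda>\<epsilon>. measure lborel (VV P f \<epsilon> p)) \<longlongrightarrow> measure lborel ({0..<2*pi} \<inter> GG P f p)) (at_right 0)"
proof -
  define S0 where "S0 = {0..<2*pi} \<inter> GG P f p"
  have fmV: "VV P f \<epsilon> p \<in> fmeasurable lborel" for \<epsilon>
    by (rule fmeasurableI2[OF Ico_fmeasurable[of 0 "2*pi"]]) (use VV_meas[OF fin] in \<open>auto simp: VV_def\<close>)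
  have S0s: "S0 \<in> sets lborel" using GG_meas[OF fin] by (auto simp: S0_def)
  have mono: "VV P f \<epsilon> p \<subseteq> VV P f \<epsilon>' p" if "0 < \<epsilon>" "\<epsilon> \<le> \<epsilon>'" for \<epsilon> \<epsilon>'
  proof
    fix t assume t: "t \<in> VV P f \<epsilon> p"
    have "\<epsilon> * (cmod v)^2 \<le> \<epsilon>' * (cmod v)^2" for v
      using that by (intro mult_right_mono) auto
    then show "t \<in> VV P f \<epsilon>' p" using t unfolding VV_def by (smt (verit) mem_Collect_eq)
  qed
  have low: "S0 \<subseteq> VV P f \<epsilon> p" if "0 < \<epsilon>" for \<epsilon>
  proof
    fix t assume t: "t \<in> S0"
    show "t \<in> VV P f \<epsilon> p" unfolding VV_def
    proof (safe)
      show "t \<in> {0..<2*pi}" using t by (simp add: S0_def)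
      fix q assume q: "q \<in> P" "f q < f p"
      then have "q \<noteq> p" by auto
      then have "0 < \<epsilon> * (cmod (p - q))^2" using that by simp
      moreover have "0 \<le> ip (p - q) t" using t q by (auto simp: S0_def GG_def)
      ultimately show "0 < \<epsilon> * (cmod (p - q))^2 + 2 * ip (p - q) t" by simp
    qed
  qed
  define A where "A k = VV P f (1 / Suc k) p" for k
  have dec: "decseq A" unfolding decseq_def A_def
    by (intro allI impI mono) (auto simp: frac_le)
  have inter: "(\<Inter>k. A k) = S0"
  proof
    show "S0 \<subseteq> (\<Inter>k. A k)" unfolding A_def by (intro INT_greatest low) simp
    show "(\<Inter>k. A k) \<subseteq> S0"
    proof
      fix t assume t: "t \<in> (\<Inter>k. A k)"
      have tk: "\<And>k. t \<in> A k" using t by blast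
      have "t \<in> {0..<2*pi}" using tk[of 0] by (simp add: A_def VV_def)
      moreover have "t \<in> GG P f p" unfolding GG_def
      proof (safe, rule ccontr)
        fix q assume q: "q \<in> P" "f q < f p" "\<not> 0 \<le> ip (p - q) t"
        define c where "c = (cmod (p - q))^2"
        define m where "m = - 2 * ip (p - q) t"
        have m0: "0 < m" using q by (simp add: m_def)
        obtain k where k: "c / m < real k" using reals_Archimedean2 by blast
        have c0: "0 \<le> c" by (simp add: c_def)
        have "c < m * real k" using k m0 by (simp add: divide_less_eq mult.commute)
        then have "c < m * real (Suc k)" using m0 by (smt (verit) mult_left_mono of_nat_Suc)
        then have ck: "c / real (Suc k) < m" by (simp add: divide_less_eq mult.commute)
        have "0 < 1 / real (Suc k) * c + 2 * ip (p - q) t"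
          using tk[of k] q unfolding A_def VV_def c_def by auto
        then show False using ck by (simp add: m_def)
      qed
      ultimately show "t \<in> S0" by (simp add: S0_def)
    qed
  qed
  have lim: "(\<lambda>k. measure lborel (A k)) \<longlonglongrightarrow> measure lborel S0"
  proof -
    have "(\<lambda>k. measure lborel (A k)) \<longlonglongrightarrow> measure lborel (\<Inter>k. A k)"
    proof (rule Lim_measure_decseq)
      show "range A \<subseteq> sets lborel" using VV_meas[OF fin] by (auto simp: A_def)
      show "decseq A" by (rule dec)
      show "emeasure lborel (A k) \<noteq> \<infinity>" for k using fmV[of "1 / Suc k"]
        by (auto simp: A_def fmeasurable_def)
    qed
    then show ?thesis by (simp add: inter)
  qed
  show ?thesis unfolding S0_def[symmetric]
  proof (rule order_tendstoI)
    fix a assume a: "a < measure lborel S0"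
    have "\<forall>y>0. y < 1 \<longrightarrow> a < measure lborel (VV P f y p)"
    proof (intro allI impI)
      fix y :: real assume "0 < y"
      then have "measure lborel S0 \<le> measure lborel (VV P f y p)"
        by (intro measure_mono_fmeasurable[OF low S0s fmV])
      then show "a < measure lborel (VV P f y p)" using a by simp
    qed
    then show "\<forall>\<^sub>F x in at_right 0. a < measure lborel (VV P f x p)"
      unfolding eventually_at_right_field by (intro exI[of _ 1]) auto
  next
    fix b assume b: "measure lborel S0 < b"
    obtain k where k: "measure lborel (A k) < b"
      using order_tendstoD(2)[OF lim b] by (auto simp: eventually_sequentially)
    have "\<forall>y>0. y < 1 / Suc k \<longrightarrow> measure lborel (VV P f y p) < b"
    proof (intro allI impI)
      fix y :: real assume "0 < y" "y < 1 / Suc k"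
      then have "measure lborel (VV P f y p) \<le> measure lborel (A k)"
        unfolding A_def by (intro measure_mono_fmeasurable[OF mono _ fmV]) (auto intro: VV_meas[OF fin])
      then show "measure lborel (VV P f y p) < b" using k by simp
    qed
    then show "\<forall>\<^sub>F x in at_right 0. measure lborel (VV P f x p) < b"
      unfolding eventually_at_right_field by (intro exI[of _ "1 / Suc k"]) auto
  qed
qed



theorem theorem2:
  fixes C :: real
  assumes "C > 0"
  shows "\<exists>C' > 0. \<forall>(n::nat) (P::complex set) (f::complex \<Rightarrow> nat).
           n > 0 \<and> finite P \<and> card P = n \<and> C_dense C P \<and> stacking_order P f \<longrightarrow>
           (\<exists>L. ((\<lambda>\<epsilon>. visible_perimeter (scale_set \<epsilon> P) (scale_order \<epsilon> f)) \<longlongrightarrow> L)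
                   (at_right 0)
                \<and> L \<le> C' * real n powr (3/4))"
proof -
  have main: "\<exists>L. ((\<lambda>\<epsilon>. visible_perimeter (scale_set \<epsilon> P) (scale_order \<epsilon> f)) \<longlongrightarrow> L) (at_right 0)
                \<and> L \<le> (8*pi*C + 2*pi + 4) * real n powr (3/4)"
    if h: "n > 0 \<and> finite P \<and> card P = n \<and> C_dense C P \<and> stacking_order P f"
    for n :: nat and P :: "complex set" and f :: "complex \<Rightarrow> nat"
  proof -
    have fin: "finite P" using h by simp
    define L where "L = (\<Sum>p\<in>P. measure lborel ({0..<2*pi} \<inter> GG P f p))"
    have "((\<lambda>\<epsilon>. \<Sum>p\<in>P. measure lborel (VV P f \<epsilon> p)) \<longlongrightarrow> L) (at_right 0)"
      unfolding L_def by (intro tendsto_sum VV_lim[OF fin])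
    moreover have "\<forall>\<^sub>F \<epsilon> in at_right 0. (\<Sum>p\<in>P. measure lborel (VV P f \<epsilon> p)) = visible_perimeter (scale_set \<epsilon> P) (scale_order \<epsilon> f)"
      unfolding eventually_at_right_field by (intro exI[of _ 1]) (auto simp: vis_eq)
    ultimately have "((\<lambda>\<epsilon>. visible_perimeter (scale_set \<epsilon> P) (scale_order \<epsilon> f)) \<longlongrightarrow> L) (at_right 0)"
      using tendsto_cong by fastforce
    moreover have "L \<le> (8*pi*C + 2*pi + 4) * real n powr (3/4)"
      using comb_bound[OF assms fin, of n f] h unfolding L_def by auto
    ultimately show ?thesis by blast
  qed
  have "0 < 8*pi*C + 2*pi + 4" using assms by (simp add: add_pos_pos)
  then show ?thesis using main by blast
qed


end
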